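(* Let $v\ge 0$. The optimal value of $$\min_{y\in\mathbb{R}^{n^-}}\ -\sum_{i=1}^{n^-}\left(\frac{y_i}{\lambda}\right)^{1/\beta}\quad\text{s.t.}\quad y_1\ge\cdots\ge y_{n^-}\ge 0,\qquad \sum_{i=1}^{n^-}h^-_iy_i=v$$ equals $$-\left(\frac{v}{\lambda}\right)^{1/\beta}\cdot\max_{L\in\{1,\dots,n^-\}} L\cdot\Big(\sum_{i=1}^{L}h^-_i\Big)^{-1/\beta}.$$
   Context: Fix $N\in\mathbb{N}$, $\beta\in(0,1)$, $\lambda>0$, and an integer $1\le n^-\le N$. A function $f:[0,1]\to\mathbb{R}$ is inverse S-shaped if it is strictly increasing, continuously differentiable, and there is $x_0\in[0,1]$ such that $f'$ is strictly decreasing on $[0,x_0]$ and strictly increasing on $[x_0,1]$. Let $W^-:[0,1]\to[0,1]$ be inverse S-shaped with $W^-(0)=0$, $W^-(1)=1$, and $h^-_i:=W^-\!\left(\frac{i}{N}\right)-W^-\!\left(\frac{i-1}{N}\right)$ for $i=1,\dots,n^-$. *)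

theory Defs
  imports "HOL-Analysis.Analysis"
begin

definition inverse_S_shaped :: "(real \<Rightarrow> real) \<Rightarrow> bool" where
  "inverse_S_shaped f \<longleftrightarrow>
     strict_mono_on {0..1} f \<and>
     (\<exists>f'. (\<forall>x\<in>{0..1}. (f has_real_derivative f' x) (at x within {0..1})) \<and>
           continuous_on {0..1} f' \<and>
           (\<exists>x0\<in>{0..1}.
              (\<forall>x\<in>{0..x0}. \<forall>y\<in>{0..x0}. x < y \<longrightarrow> f' y < f' x) \<and>
              (\<forall>x\<in>{x0..1}. \<forall>y\<in>{x0..1}. x < y \<longrightarrow> f' x < f' y)))"

definition hminus :: "(real \<Rightarrow> real) \<Rightarrow> nat \<Rightarrow> nat \<Rightarrow> real" where
  "hminus W N i = W (real i / real N) - W (real (i - 1) / real N)"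

definition feasible :: "(nat \<Rightarrow> real) \<Rightarrow> nat \<Rightarrow> real \<Rightarrow> (nat \<Rightarrow> real) \<Rightarrow> bool" where
  "feasible h n v y \<longleftrightarrow>
     (\<forall>i\<in>{1..<n}. y (Suc i) \<le> y i) \<and> 0 \<le> y n \<and>
     (\<Sum>i=1..n. h i * y i) = v"

definition objective :: "real \<Rightarrow> real \<Rightarrow> nat \<Rightarrow> (nat \<Rightarrow> real) \<Rightarrow> real" where
  "objective lam \<beta> n y = - (\<Sum>i=1..n. (y i / lam) powr (1 / \<beta>))"

end

theory Submission
  imports Defs
begin

lemma powr_le_self: "0 < (t::real) \<Longrightarrow> t \<le> 1 \<Longrightarrow> 1 \<le> p \<Longrightarrow> t powr p \<le> t"
  using powr_le_one_le by auto
lemma convex_powr0: assumes "(p::real) \<ge> 1" shows "convex_on {0..} (\<lambda>x::real. x powr p)"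
proof (rule convex_onI)
  fix t x y :: real assume t: "0 < t" "t < 1" and xy: "x \<in> {0..}" "y \<in> {0..}"
  show "((1 - t) *\<^sub>R x + t *\<^sub>R y) powr p \<le> (1 - t) * x powr p + t * y powr p"
  proof (cases "x = 0 \<or> y = 0")
    case False
    then show ?thesis using xy t convex_onD[OF powr_convex[OF assms], of t x y] by auto
  next
    case True
    then show ?thesis
    proof
      assume x: "x = 0"
      have "(t * y) powr p = t powr p * y powr p" using t xy by (simp add: powr_mult)
      also have "\<dots> \<le> t * y powr p" using powr_le_self[of t p] t assms
        by (intro mult_right_mono) auto
      finally show ?thesis using x assms by simp
    next
      assume y: "y = 0"
      have "((1-t) * x) powr p = (1-t) powr p * x powr p" using t xy by (simp add: powr_mult)
      also have "\<dots> \<le> (1-t) * x powr p" using powr_le_self[of "1-t" p] t assms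
        by (intro mult_right_mono) auto
      finally show ?thesis using y assms by simp
    qed
  qed
qed auto

lemma mono_seq:
  fixes y :: "nat \<Rightarrow> real"
  assumes "\<forall>i\<in>{1..<n}. y (Suc i) \<le> y i" "1 \<le> i" "i \<le> j" "j \<le> n"
  shows "y j \<le> y i"
  using assms(3,4)
proof (induction j rule: dec_induct)
  case base then show ?case by simp
next
  case (step m)
  then have "m \<in> {1..<n}" using assms(2) by auto
  then have "y (Suc m) \<le> y m" using assms(1) by blast
  then show ?case using step by simp
qed

lemma sum_ge_if: "1 \<le> i \<Longrightarrow> sum (f::nat\<Rightarrow>real) {i..n} = (\<Sum>L=1..n. if i \<le> L then f L else 0)"
proof -
  assume "1 \<le> i"
  then have "{1..n} \<inter> {L. i \<le> L} = {i..n}" by auto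
  then show ?thesis by (simp add: sum.If_cases)
qed

lemma ub:
  fixes h y :: "nat \<Rightarrow> real" and p v :: real and n :: nat
  assumes p: "p \<ge> 1" and hpos: "\<forall>i\<in>{1..n}. h i > 0"
    and dec: "\<forall>i\<in>{1..<n}. y (Suc i) \<le> y i" and yn: "0 \<le> y n"
    and sv: "(\<Sum>i=1..n. h i * y i) = v" and n1: "n \<ge> 1"
  shows "(\<Sum>i=1..n. y i powr p) \<le> v powr p * Max ((\<lambda>L. real L * (\<Sum>i=1..L. h i) powr (-p)) ` {1..n})"
proof -
  define M where "M = Max ((\<lambda>L. real L * (\<Sum>i=1..L. h i) powr (-p)) ` {1..n})"
  define H where "H L = (\<Sum>i=1..L. h i)" for L
  have Mge: "real L * H L powr (-p) \<le> M" if "L \<in> {1..n}" for L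
    unfolding M_def H_def using that by (intro Max_ge) auto
  have Hpos: "H L > 0" if "L \<in> {1..n}" for L
    unfolding H_def using that hpos by (intro sum_pos) auto
  have ynn: "y i \<ge> 0" if "i \<in> {1..n}" for i
    using mono_seq[OF dec, of i n] that yn by auto
  define d where "d L = (if L < n then y L - y (Suc L) else y n)" for L
  have dnn: "d L \<ge> 0" if "L \<in> {1..n}" for L
    using that dec yn unfolding d_def by auto
  have yd: "y i = sum d {i..n}" if "i \<in> {1..n}" for i
  proof -
    have "{i..n} = insert n {i..<n}" using that by auto
    then have "sum d {i..n} = d n + sum d {i..<n}" by simp
    also have "sum d {i..<n} = (\<Sum>L=i..<n. (- y) (Suc L) - (- y) L)"
      unfolding d_def by (intro sum.cong) auto
    also have "\<dots> = y i - y n" using sum_Suc_diff'[of i n "- y"] that by simp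
    finally show ?thesis unfolding d_def by simp
  qed
  have vd: "v = (\<Sum>L=1..n. d L * H L)"
  proof -
    have "v = (\<Sum>i=1..n. h i * (\<Sum>L=1..n. if i \<le> L then d L else 0))"
      unfolding sv[symmetric]
    proof (intro sum.cong refl)
      fix i assume i: "i \<in> {1..n}"
      show "h i * y i = h i * (\<Sum>L=1..n. if i \<le> L then d L else 0)"
        using yd[OF i] sum_ge_if[of i d n] i by simp
    qed
    also have "\<dots> = (\<Sum>i=1..n. \<Sum>L=1..n. if i \<le> L then h i * d L else 0)"
      by (simp add: sum_distrib_left if_distrib cong: if_cong)
    also have "\<dots> = (\<Sum>L=1..n. \<Sum>i=1..n. if i \<le> L then h i * d L else 0)"
      by (rule sum.swap)
    also have "\<dots> = (\<Sum>L=1..n. d L * H L)"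
    proof (intro sum.cong refl)
      fix L assume L: "L \<in> {1..n}"
      have "{1..n} \<inter> {i. i \<le> L} = {1..L}" using L by auto
      then show "(\<Sum>i=1..n. if i \<le> L then h i * d L else 0) = d L * H L"
        by (simp add: sum.If_cases H_def sum_distrib_left mult.commute)
    qed
    finally show ?thesis .
  qed
  have dH: "d L * H L \<ge> 0" if "L \<in> {1..n}" for L
    using dnn[OF that] Hpos[OF that] by simp
  have v0: "v \<ge> 0" unfolding vd using dH by (intro sum_nonneg) auto
  show ?thesis
  proof (cases "v = 0")
    case True
    have "d L * H L = 0" if "L \<in> {1..n}" for L
      using sum_nonneg_eq_0_iff[of "{1..n}" "\<lambda>L. d L * H L"] vd True dH that
      by simp
    then have "d L = 0" if "L \<in> {1..n}" for L using that Hpos by force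
    then have "y i = 0" if "i \<in> {1..n}" for i using yd[OF that] that by simp
    then show ?thesis using True by simp
  next
    case False
    then have vpos: "v > 0" using v0 by simp
    define w where "w L = d L * H L / v" for L
    define c where "c L = (v / H L) powr p" for L
    have wnn: "w L \<ge> 0" if "L \<in> {1..n}" for L
      unfolding w_def using dnn[OF that] Hpos[OF that] vpos by simp
    have w1: "sum w {1..n} = 1"
      unfolding w_def using vd vpos by (simp add: sum_divide_distrib[symmetric])
    have key: "y i powr p \<le> (\<Sum>L=1..n. w L * (if i \<le> L then c L else 0))" if i: "i \<in> {1..n}" for i
    proof -
      have "y i = (\<Sum>L=1..n. w L *\<^sub>R (if i \<le> L then v / H L else 0))"
      proof -
        have "y i = (\<Sum>L=1..n. if i \<le> L then d L else 0)"
          using yd[OF i] sum_ge_if[of i d n] i by simp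
        also have "\<dots> = (\<Sum>L=1..n. w L *\<^sub>R (if i \<le> L then v / H L else 0))"
        proof (intro sum.cong refl)
          fix L assume L: "L \<in> {1..n}"
          have "H L > 0" using Hpos[OF L] .
          then show "(if i \<le> L then d L else 0) = w L *\<^sub>R (if i \<le> L then v / H L else 0)"
            using vpos by (simp add: w_def)
        qed
        finally show ?thesis .
      qed
      moreover have "(\<Sum>L=1..n. w L *\<^sub>R (if i \<le> L then v / H L else 0)) powr p
          \<le> (\<Sum>L=1..n. w L * (if i \<le> L then v / H L else 0) powr p)"
      proof (rule convex_on_sum[OF _ _ convex_powr0[OF p], of "{1..n}" w "\<lambda>L. if i \<le> L then v / H L else 0"])
        show "finite {1..n}" by simp
        show "{1..n} \<noteq> {}" using n1 by simp
        show "sum w {1..n} = 1" by (rule w1)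
        show "\<And>L. L \<in> {1..n} \<Longrightarrow> 0 \<le> w L" by (rule wnn)
        fix L assume L: "L \<in> {1..n}"
        have "H L > 0" using Hpos[OF L] .
        then show "(if i \<le> L then v / H L else 0) \<in> {0..}" using vpos by simp
      qed
      ultimately have "y i powr p \<le> (\<Sum>L=1..n. w L * (if i \<le> L then v / H L else 0) powr p)"
        by simp
      also have "\<dots> = (\<Sum>L=1..n. w L * (if i \<le> L then c L else 0))"
        using p unfolding c_def by (intro sum.cong refl) auto
      finally show ?thesis .
    qed
    have "(\<Sum>i=1..n. y i powr p) \<le> (\<Sum>i=1..n. \<Sum>L=1..n. w L * (if i \<le> L then c L else 0))"
      using key by (rule sum_mono)
    also have "\<dots> = (\<Sum>L=1..n. \<Sum>i=1..n. w L * (if i \<le> L then c L else 0))"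
      by (rule sum.swap)
    also have "\<dots> = (\<Sum>L=1..n. w L * (real L * c L))"
    proof (intro sum.cong refl)
      fix L assume L: "L \<in> {1..n}"
      have "{1..n} \<inter> {i. i \<le> L} = {1..L}" using L by auto
      then show "(\<Sum>i=1..n. w L * (if i \<le> L then c L else 0)) = w L * (real L * c L)"
        by (simp add: if_distrib sum.If_cases cong: if_cong)
    qed
    also have "\<dots> \<le> (\<Sum>L=1..n. w L * (v powr p * M))"
    proof (intro sum_mono mult_left_mono wnn)
      fix L assume L: "L \<in> {1..n}"
      have "c L = v powr p * H L powr (-p)"
        unfolding c_def using vpos Hpos[OF L] by (simp add: powr_divide powr_minus_divide)
      then have "real L * c L = v powr p * (real L * H L powr (-p))" by simp
      also have "\<dots> \<le> v powr p * M" using Mge[OF L] by (intro mult_left_mono) auto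
      finally show "real L * c L \<le> v powr p * M" .
    qed
    also have "\<dots> = v powr p * M" using w1 by (simp add: sum_distrib_right[symmetric])
    finally show ?thesis unfolding M_def H_def .
  qed
qed

theorem corollary2:
  fixes N nm :: nat and \<beta> lam v :: real and W :: "real \<Rightarrow> real"
  assumes "0 < \<beta>" "\<beta> < 1" "0 < lam"
    and "1 \<le> nm" "nm \<le> N"
    and "inverse_S_shaped W" "W 0 = 0" "W 1 = 1"
    and "\<forall>x\<in>{0..1}. W x \<in> {0..1}"
    and "0 \<le> v"
  shows "(\<exists>y. feasible (hminus W N) nm v y \<and>
             objective lam \<beta> nm y =
               - ((v / lam) powr (1 / \<beta>)) *
                 Max ((\<lambda>L. real L * (\<Sum>i=1..L. hminus W N i) powr (- 1 / \<beta>)) ` {1..nm})) \<and>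
         (\<forall>y. feasible (hminus W N) nm v y \<longrightarrow>
             - ((v / lam) powr (1 / \<beta>)) *
                 Max ((\<lambda>L. real L * (\<Sum>i=1..L. hminus W N i) powr (- 1 / \<beta>)) ` {1..nm})
             \<le> objective lam \<beta> nm y)"
proof -
  define p where "p = 1 / \<beta>"
  define h where "h = hminus W N"
  have p1: "p \<ge> 1" unfolding p_def using assms(1,2) by simp
  have mp: "- 1 / \<beta> = - p" unfolding p_def by simp
  have sm: "strict_mono_on {0..1} W" using assms(6) unfolding inverse_S_shaped_def by blast
  have hpos: "\<forall>i\<in>{1..nm}. h i > 0"
  proof
    fix i assume i: "i \<in> {1..nm}"
    have N: "real N > 0" using assms(4,5) by simp
    have a: "real (i - 1) / real N \<in> {0..1}" "real i / real N \<in> {0..1}"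
      using i assms(5) N by (auto simp: field_simps)
    have "real (i - 1) / real N < real i / real N" using i N
      by (intro divide_strict_right_mono) auto
    then have "W (real (i - 1) / real N) < W (real i / real N)"
      using sm a by (auto simp: strict_mono_on_def)
    then show "h i > 0" unfolding h_def hminus_def by simp
  qed
  define F where "F L = real L * (\<Sum>i=1..L. h i) powr (- p)" for L
  define M where "M = Max (F ` {1..nm})"
  have goal_eq: "Max ((\<lambda>L. real L * (\<Sum>i=1..L. hminus W N i) powr (- 1 / \<beta>)) ` {1..nm}) = M"
    unfolding M_def F_def h_def mp ..
  have part2: "- ((v / lam) powr p) * M \<le> objective lam \<beta> nm y" if f: "feasible h nm v y" for y
  proof -
    have dec: "\<forall>i\<in>{1..<nm}. y (Suc i) \<le> y i" and yn: "0 \<le> y nm"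
      and sv: "(\<Sum>i=1..nm. h i * y i) = v" using f unfolding feasible_def by auto
    have ynn: "y i \<ge> 0" if "i \<in> {1..nm}" for i
      using mono_seq[OF dec, of i nm] that yn by auto
    have "(\<Sum>i=1..nm. y i powr p) \<le> v powr p * M"
      using ub[OF p1 hpos dec yn sv assms(4)] unfolding M_def F_def .
    moreover have "(\<Sum>i=1..nm. (y i / lam) powr p) = (\<Sum>i=1..nm. y i powr p) / lam powr p"
      unfolding sum_divide_distrib using ynn assms(3) by (intro sum.cong refl) (simp add: powr_divide)
    ultimately have "(\<Sum>i=1..nm. (y i / lam) powr p) \<le> v powr p * M / lam powr p"
      using assms(3) by (simp add: divide_right_mono)
    also have "\<dots> = (v / lam) powr p * M" using assms(3,10) by (simp add: powr_divide)
    finally show ?thesis unfolding objective_def p_def[symmetric] by simp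
  qed
  obtain L0 where L0: "L0 \<in> {1..nm}" "F L0 = M"
    unfolding M_def using Max_in[of "F ` {1..nm}"] assms(4) by fastforce
  define H0 where "H0 = (\<Sum>i=1..L0. h i)"
  have H0: "H0 > 0" unfolding H0_def using L0 hpos by (intro sum_pos) auto
  define y0 where "y0 i = (if i \<le> L0 then v / H0 else 0)" for i
  have f0: "feasible h nm v y0"
    unfolding feasible_def
  proof (intro conjI)
    show "\<forall>i\<in>{1..<nm}. y0 (Suc i) \<le> y0 i" using H0 assms(10) by (auto simp: y0_def)
    show "0 \<le> y0 nm" using H0 assms(10) by (auto simp: y0_def)
    have "{1..nm} \<inter> {i. i \<le> L0} = {1..L0}" using L0 by auto
    then have "(\<Sum>i=1..nm. h i * y0 i) = (\<Sum>i=1..L0. h i * (v / H0))"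
      unfolding y0_def by (simp add: if_distrib sum.If_cases cong: if_cong)
    also have "\<dots> = v" using H0 unfolding H0_def[symmetric] sum_distrib_right[symmetric] by simp
    finally show "(\<Sum>i=1..nm. h i * y0 i) = v" .
  qed
  have o0: "objective lam \<beta> nm y0 = - ((v / lam) powr p) * M"
  proof -
    have "{1..nm} \<inter> {i. i \<le> L0} = {1..L0}" using L0 by auto
    have "(\<Sum>i=1..nm. (y0 i / lam) powr p) = (\<Sum>i=1..nm. if i \<le> L0 then (v / H0 / lam) powr p else 0)"
      unfolding y0_def by (intro sum.cong refl) simp
    also have "\<dots> = (\<Sum>i=1..L0. (v / H0 / lam) powr p)"
      using \<open>{1..nm} \<inter> {i. i \<le> L0} = {1..L0}\<close> by (simp add: sum.If_cases)
    finally have "(\<Sum>i=1..nm. (y0 i / lam) powr p) = (\<Sum>i=1..L0. (v / H0 / lam) powr p)" .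
    also have "\<dots> = real L0 * (v / H0 / lam) powr p" by simp
    also have "(v / H0 / lam) powr p = (v / lam) powr p * H0 powr (- p)"
      using H0 assms(3,10) by (simp add: powr_divide powr_minus_divide powr_mult)
    finally have "(\<Sum>i=1..nm. (y0 i / lam) powr p) = (v / lam) powr p * F L0"
      unfolding F_def H0_def by simp
    then show ?thesis unfolding objective_def p_def[symmetric] L0(2) by simp
  qed
  have goal_eq': "Max ((\<lambda>L. real L * (\<Sum>i=1..L. h i) powr (- 1 / \<beta>)) ` {1..nm}) = M"
    unfolding M_def F_def mp ..
  show ?thesis unfolding p_def[symmetric] h_def[symmetric] goal_eq'
    using f0 o0 part2 by blast
qed

end
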